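(* $\mathrm{MA}_{\aleph_1}(\text{$\sigma$-linked})$ is equivalent to $\mathrm{MA}_{\aleph_1}(\text{$\aleph_1$-$\sigma$-linked})$, and $\mathrm{MA}_{\aleph_1}(\text{$\sigma$-centered})$ is equivalent to $\mathrm{MA}_{\aleph_1}(\text{$\aleph_1$-$\sigma$-centered})$.
   Context: A poset is $\sigma$-linked ($\sigma$-centered) if it is a countable union of linked (pairwise compatible) sets (centered sets: every finite subset has a common lower bound). A poset $\mathbb{P}$ is $\aleph_1$-$\sigma$-linked (resp. $\aleph_1$-$\sigma$-centered) if for every sequence $\langle p_\alpha:\alpha<\omega_1\rangle$ of conditions, $\{p_\alpha:\alpha<\omega_1\}$ is covered by countably many linked (resp. centered) subsets of $\mathbb{P}$. $\mathrm{MA}_{\aleph_1}(\Phi)$: for every poset with property $\Phi$ and every family of $\aleph_1$ dense subsets there is a filter meeting all of them. *)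

theory Defs imports Main begin

text \<open>A poset is given by a carrier P and a relation le (le q p means q extends p, q \<le> p).\<close>
definition poset :: "'a set \<Rightarrow> ('a \<Rightarrow> 'a \<Rightarrow> bool) \<Rightarrow> bool" where
  "poset P le \<longleftrightarrow> P \<noteq> {} \<and> (\<forall>p\<in>P. le p p)
     \<and> (\<forall>p\<in>P. \<forall>q\<in>P. \<forall>r\<in>P. le p q \<longrightarrow> le q r \<longrightarrow> le p r)
     \<and> (\<forall>p\<in>P. \<forall>q\<in>P. le p q \<longrightarrow> le q p \<longrightarrow> p = q)"

definition compatible :: "'a set \<Rightarrow> ('a \<Rightarrow> 'a \<Rightarrow> bool) \<Rightarrow> 'a \<Rightarrow> 'a \<Rightarrow> bool" where
  "compatible P le p q \<longleftrightarrow> (\<exists>r\<in>P. le r p \<and> le r q)"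

definition linked :: "'a set \<Rightarrow> ('a \<Rightarrow> 'a \<Rightarrow> bool) \<Rightarrow> 'a set \<Rightarrow> bool" where
  "linked P le A \<longleftrightarrow> A \<subseteq> P \<and> (\<forall>p\<in>A. \<forall>q\<in>A. compatible P le p q)"

definition centered :: "'a set \<Rightarrow> ('a \<Rightarrow> 'a \<Rightarrow> bool) \<Rightarrow> 'a set \<Rightarrow> bool" where
  "centered P le A \<longleftrightarrow> A \<subseteq> P \<and>
     (\<forall>F. finite F \<and> F \<subseteq> A \<longrightarrow> (\<exists>r\<in>P. \<forall>p\<in>F. le r p))"

definition sigma_linked :: "'a set \<Rightarrow> ('a \<Rightarrow> 'a \<Rightarrow> bool) \<Rightarrow> bool" where
  "sigma_linked P le \<longleftrightarrow> (\<exists>L :: nat \<Rightarrow> 'a set. (\<forall>n. linked P le (L n)) \<and> P = (\<Union>n. L n))"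

definition sigma_centered :: "'a set \<Rightarrow> ('a \<Rightarrow> 'a \<Rightarrow> bool) \<Rightarrow> bool" where
  "sigma_centered P le \<longleftrightarrow> (\<exists>L :: nat \<Rightarrow> 'a set. (\<forall>n. centered P le (L n)) \<and> P = (\<Union>n. L n))"

definition omega1 :: "nat set set" where
  "omega1 = Field (cardSuc natLeq)"

definition aleph1_sigma_linked :: "'a set \<Rightarrow> ('a \<Rightarrow> 'a \<Rightarrow> bool) \<Rightarrow> bool" where
  "aleph1_sigma_linked P le \<longleftrightarrow> (\<forall>p :: nat set \<Rightarrow> 'a. p ` omega1 \<subseteq> P \<longrightarrow>
     (\<exists>L :: nat \<Rightarrow> 'a set. (\<forall>n. linked P le (L n)) \<and> p ` omega1 \<subseteq> (\<Union>n. L n)))"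

definition aleph1_sigma_centered :: "'a set \<Rightarrow> ('a \<Rightarrow> 'a \<Rightarrow> bool) \<Rightarrow> bool" where
  "aleph1_sigma_centered P le \<longleftrightarrow> (\<forall>p :: nat set \<Rightarrow> 'a. p ` omega1 \<subseteq> P \<longrightarrow>
     (\<exists>L :: nat \<Rightarrow> 'a set. (\<forall>n. centered P le (L n)) \<and> p ` omega1 \<subseteq> (\<Union>n. L n)))"

definition dense :: "'a set \<Rightarrow> ('a \<Rightarrow> 'a \<Rightarrow> bool) \<Rightarrow> 'a set \<Rightarrow> bool" where
  "dense P le D \<longleftrightarrow> D \<subseteq> P \<and> (\<forall>p\<in>P. \<exists>d\<in>D. le d p)"

definition filter_in :: "'a set \<Rightarrow> ('a \<Rightarrow> 'a \<Rightarrow> bool) \<Rightarrow> 'a set \<Rightarrow> bool" where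
  "filter_in P le G \<longleftrightarrow> G \<subseteq> P \<and> G \<noteq> {}
     \<and> (\<forall>p\<in>G. \<forall>q\<in>P. le p q \<longrightarrow> q \<in> G)
     \<and> (\<forall>p\<in>G. \<forall>q\<in>G. \<exists>r\<in>G. le r p \<and> le r q)"

text \<open>MA_aleph1(Phi), for posets whose elements live in the type 'a (the type is arbitrary).\<close>
definition MA_aleph1 :: "('a set \<Rightarrow> ('a \<Rightarrow> 'a \<Rightarrow> bool) \<Rightarrow> bool) \<Rightarrow> bool" where
  "MA_aleph1 \<Phi> \<longleftrightarrow> (\<forall>P le. poset P le \<and> \<Phi> P le \<longrightarrow>
     (\<forall>D :: nat set \<Rightarrow> 'a set. (\<forall>\<alpha>\<in>omega1. dense P le (D \<alpha>)) \<longrightarrow>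
        (\<exists>G. filter_in P le G \<and> (\<forall>\<alpha>\<in>omega1. G \<inter> D \<alpha> \<noteq> {}))))"

end

theory Submission imports Defs begin

unbundle cardinal_syntax

lemma omega1_ordIso: "|omega1| =o cardSuc natLeq"
  unfolding omega1_def by (rule card_of_Field_ordIso[OF cardSuc_Card_order[OF natLeq_Card_order]])

lemma nat_small: "|UNIV::nat set| \<le>o |omega1|"
proof -
  have "|UNIV::nat set| =o natLeq" by (rule card_of_nat)
  moreover have "natLeq <o cardSuc natLeq" by (rule cardSuc_greater[OF natLeq_Card_order])
  ultimately have "|UNIV::nat set| <o cardSuc natLeq" using ordIso_ordLess_trans by blast
  then have "|UNIV::nat set| <o |omega1|" using omega1_ordIso ordLess_ordIso_trans ordIso_symmetric by blast
  then show ?thesis using ordLess_imp_ordLeq by blast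
qed

lemma omega1_inf: "\<not> finite omega1"
  using card_of_ordLeq_infinite[OF nat_small] by simp

lemma small_UN: "|I| \<le>o |omega1| \<Longrightarrow> \<forall>i\<in>I. |A i| \<le>o |omega1| \<Longrightarrow> |\<Union>i\<in>I. A i| \<le>o |omega1|"
  using card_of_UNION_ordLeq_infinite[OF omega1_inf] by blast

lemma small_Un: assumes "|A| \<le>o |omega1|" "|B| \<le>o |omega1|" shows "|A \<union> B| \<le>o |omega1|"
proof -
  have e: "A \<union> B = (\<Union>i\<in>{0::nat,1}. if i = 0 then A else B)" by auto
  have f: "|{0::nat,1}| \<le>o |omega1|"
    using card_of_mono1[of "{0::nat,1}" UNIV] nat_small ordLeq_transitive by blast
  have "|\<Union>i\<in>{0::nat,1}. if i = 0 then A else B| \<le>o |omega1|"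
    by (rule small_UN[OF f]) (simp add: assms)
  then show ?thesis unfolding e .
qed

lemma small_image: "|A| \<le>o |omega1| \<Longrightarrow> |f ` A| \<le>o |omega1|"
  using card_of_image ordLeq_transitive by blast

lemma small_lists: assumes A: "|A| \<le>o |omega1|" shows "|lists A| \<le>o |omega1|"
proof -
  define lv where "lv n = {xs. set xs \<subseteq> A \<and> length xs = n}" for n
  have lvn: "|lv n| \<le>o |omega1|" for n
  proof (induction n)
    case 0
    have "lv 0 = (\<lambda>_. []) ` A \<or> lv 0 = {[]}" unfolding lv_def by auto
    have "lv 0 = (\<lambda>_::nat. []) ` {0::nat}" unfolding lv_def by auto
    moreover have "|{0::nat}| \<le>o |omega1|"
      using card_of_mono1[of "{0::nat}" UNIV] nat_small ordLeq_transitive by blast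
    ultimately show ?case using small_image by metis
  next
    case (Suc n)
    have "lv (Suc n) = (\<Union>a\<in>A. Cons a ` lv n)"
      unfolding lv_def by (auto simp: length_Suc_conv)
    moreover have "\<forall>a\<in>A. |Cons a ` lv n| \<le>o |omega1|" using small_image[OF Suc.IH] by blast
    ultimately show ?case using small_UN[OF A, of "\<lambda>a. Cons a ` lv n"] by simp
  qed
  have e: "lists A = (\<Union>n\<in>UNIV. lv n)" unfolding lv_def by auto
  have "|\<Union>n\<in>UNIV. lv n| \<le>o |omega1|" by (rule small_UN[OF nat_small]) (simp add: lvn)
  then show ?thesis unfolding e .
qed

lemma MA_mono: assumes i: "\<And>P le. \<Phi> P le \<Longrightarrow> \<Psi> P le" and m: "MA_aleph1 \<Psi>" shows "MA_aleph1 \<Phi>"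
  unfolding MA_aleph1_def
proof (intro allI impI)
  fix P le D assume a: "poset P le \<and> \<Phi> P le" and d: "\<forall>\<alpha>\<in>omega1. dense P le (D \<alpha>)"
  have "poset P le \<and> \<Psi> P le" using a i by simp
  then show "\<exists>G. filter_in P le G \<and> (\<forall>\<alpha>\<in>omega1. G \<inter> D \<alpha> \<noteq> {})"
    using m d unfolding MA_aleph1_def by simp
qed

lemma easy_l: "sigma_linked P le \<Longrightarrow> aleph1_sigma_linked P le"
  unfolding sigma_linked_def aleph1_sigma_linked_def by blast

lemma easy_c: "sigma_centered P le \<Longrightarrow> aleph1_sigma_centered P le"
  unfolding sigma_centered_def aleph1_sigma_centered_def by blast

lemma finite_subset_chain:
  assumes "finite F" "F \<subseteq> (\<Union>n. S n)" "\<And>n. S n \<subseteq> S (Suc n)"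
  shows "\<exists>n. F \<subseteq> S n"
  using assms(1,2)
proof (induction F rule: finite_induct)
  case empty then show ?case by auto
next
  case (insert x F)
  then obtain n where n: "F \<subseteq> S n" by auto
  from insert obtain m where m: "x \<in> S m" by auto
  have mono: "S a \<subseteq> S b" if "a \<le> b" for a b
    using lift_Suc_mono_le[of S, OF assms(3) that] .
  have "F \<subseteq> S (max n m)" using n mono[of n "max n m"] by auto
  moreover have "x \<in> S (max n m)" using m mono[of m "max n m"] by auto
  ultimately show ?case by blast
qed

lemma reduction:
  assumes po: "poset P le" and dn: "\<forall>\<alpha>\<in>omega1. dense P le (D \<alpha>)"
  obtains Q where "Q \<subseteq> P" "Q \<noteq> {}" "|Q| \<le>o |omega1|"
    "\<forall>\<alpha>\<in>omega1. \<forall>p\<in>Q. \<exists>d\<in>Q \<inter> D \<alpha>. le d p"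
    "\<forall>F. finite F \<and> F \<subseteq> Q \<and> (\<exists>r\<in>P. \<forall>p\<in>F. le r p) \<longrightarrow> (\<exists>r\<in>Q. \<forall>p\<in>F. le r p)"
proof -
  obtain p0 where p0: "p0 \<in> P" using po unfolding poset_def by auto
  define fd where "fd \<alpha> p = (SOME d. d \<in> D \<alpha> \<and> le d p)" for \<alpha> p
  define g where "g F = (if \<exists>r\<in>P. \<forall>p\<in>F. le r p then (SOME r. r \<in> P \<and> (\<forall>p\<in>F. le r p)) else p0)" for F
  define step where "step S = S \<union> (\<Union>\<alpha>\<in>omega1. fd \<alpha> ` S) \<union> (\<lambda>xs. g (set xs)) ` lists S" for S
  define st where "st = rec_nat {p0} (\<lambda>_ S. step S)"
  have st0: "st 0 = {p0}" and stS: "st (Suc n) = step (st n)" for n unfolding st_def by auto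
  have fdP: "fd \<alpha> p \<in> D \<alpha> \<and> le (fd \<alpha> p) p" if "\<alpha> \<in> omega1" "p \<in> P" for \<alpha> p
  proof -
    have "\<exists>d. d \<in> D \<alpha> \<and> le d p" using dn that unfolding dense_def by blast
    then show ?thesis unfolding fd_def by (rule someI_ex)
  qed
  have gP: "g F \<in> P" for F
  proof (cases "\<exists>r\<in>P. \<forall>p\<in>F. le r p")
    case True
    then have "\<exists>r. r \<in> P \<and> (\<forall>p\<in>F. le r p)" by blast
    then have "(SOME r. r \<in> P \<and> (\<forall>p\<in>F. le r p)) \<in> P" by (rule someI2_ex) auto
    then show ?thesis using True unfolding g_def by simp
  next
    case False then have "g F = p0" unfolding g_def by (rule if_not_P)
    then show ?thesis using p0 by simp
  qed
  have gL: "\<forall>p\<in>F. le (g F) p" if "\<exists>r\<in>P. \<forall>p\<in>F. le r p" for F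
  proof -
    from that have "\<exists>r. r \<in> P \<and> (\<forall>p\<in>F. le r p)" by blast
    then have "\<forall>p\<in>F. le (SOME r. r \<in> P \<and> (\<forall>p\<in>F. le r p)) p" by (rule someI2_ex) auto
    then show ?thesis using that unfolding g_def by simp
  qed
  have DP: "D \<alpha> \<subseteq> P" if "\<alpha> \<in> omega1" for \<alpha> using dn that unfolding dense_def by blast
  have stP: "st n \<subseteq> P" for n
  proof (induction n)
    case 0 then show ?case using st0 p0 by simp
  next
    case (Suc n)
    show ?case unfolding stS step_def using Suc fdP DP gP by blast
  qed
  have stsmall: "|st n| \<le>o |omega1|" for n
  proof (induction n)
    case 0
    have "st 0 = (\<lambda>_::nat. p0) ` {0::nat}" using st0 by auto
    moreover have "|{0::nat}| \<le>o |omega1|"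
      using card_of_mono1[of "{0::nat}" UNIV] nat_small ordLeq_transitive by blast
    ultimately show ?case using small_image by metis
  next
    case (Suc n)
    have a: "|(\<Union>\<alpha>\<in>omega1. fd \<alpha> ` st n)| \<le>o |omega1|"
      using small_UN[OF card_of_mono1[OF order_refl], of "\<lambda>\<alpha>. fd \<alpha> ` st n"] small_image[OF Suc.IH] by blast
    have b: "|(\<lambda>xs. g (set xs)) ` lists (st n)| \<le>o |omega1|"
      using small_image[OF small_lists[OF Suc.IH]] by blast
    show ?case unfolding stS step_def by (rule small_Un[OF small_Un[OF Suc.IH a] b])
  qed
  define Q where "Q = (\<Union>n. st n)"
  have mono: "st n \<subseteq> st (Suc n)" for n unfolding stS step_def by blast
  show ?thesis
  proof
    show "Q \<subseteq> P" unfolding Q_def using stP by blast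
    show "Q \<noteq> {}" unfolding Q_def using st0 by blast
    show "|Q| \<le>o |omega1|" unfolding Q_def by (rule small_UN[OF nat_small]) (simp add: stsmall)
    show "\<forall>\<alpha>\<in>omega1. \<forall>p\<in>Q. \<exists>d\<in>Q \<inter> D \<alpha>. le d p"
    proof (intro ballI)
      fix \<alpha> p assume a: "\<alpha> \<in> omega1" and "p \<in> Q"
      then obtain n where n: "p \<in> st n" unfolding Q_def by blast
      then have "fd \<alpha> p \<in> st (Suc n)" unfolding stS step_def using a by blast
      then show "\<exists>d\<in>Q \<inter> D \<alpha>. le d p" using fdP[OF a] stP n unfolding Q_def by blast
    qed
    show "\<forall>F. finite F \<and> F \<subseteq> Q \<and> (\<exists>r\<in>P. \<forall>p\<in>F. le r p) \<longrightarrow> (\<exists>r\<in>Q. \<forall>p\<in>F. le r p)"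
    proof (intro allI impI)
      fix F assume F: "finite F \<and> F \<subseteq> Q \<and> (\<exists>r\<in>P. \<forall>p\<in>F. le r p)"
      then obtain n where n: "F \<subseteq> st n" using finite_subset_chain[of F st] mono unfolding Q_def by blast
      obtain xs where xs: "set xs = F" using F finite_list by blast
      have "xs \<in> lists (st n)" using xs n by auto
      then have "g F \<in> st (Suc n)" unfolding stS step_def using xs by blast
      then show "\<exists>r\<in>Q. \<forall>p\<in>F. le r p" using gL F unfolding Q_def by blast
    qed
  qed
qed

lemma lift:
  assumes po: "poset P le" and QP: "Q \<subseteq> P" and G: "filter_in Q le G"
    and m: "\<forall>\<alpha>\<in>omega1. G \<inter> (D \<alpha> \<inter> Q) \<noteq> {}"
  shows "\<exists>G'. filter_in P le G' \<and> (\<forall>\<alpha>\<in>omega1. G' \<inter> D \<alpha> \<noteq> {})"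
proof -
  define G' where "G' = {q\<in>P. \<exists>p\<in>G. le p q}"
  have GQ: "G \<subseteq> Q" using G unfolding filter_in_def by blast
  have refl: "le p p" if "p \<in> P" for p using po that unfolding poset_def by blast
  have trans: "le p r" if "le p q" "le q r" "p \<in> P" "q \<in> P" "r \<in> P" for p q r
    using po that unfolding poset_def by blast
  have GG': "G \<subseteq> G'" unfolding G'_def using GQ QP refl by blast
  have "filter_in P le G'"
    unfolding filter_in_def
  proof (intro conjI ballI impI)
    show "G' \<subseteq> P" unfolding G'_def by blast
    show "G' \<noteq> {}" using GG' G unfolding filter_in_def by blast
  next
    fix p q assume "p \<in> G'" "q \<in> P" "le p q"
    then show "q \<in> G'" unfolding G'_def using trans GQ QP by blast
  next
    fix q1 q2 assume "q1 \<in> G'" "q2 \<in> G'"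
    then obtain p1 p2 where p: "p1 \<in> G" "p2 \<in> G" "le p1 q1" "le p2 q2" "q1 \<in> P" "q2 \<in> P"
      unfolding G'_def by blast
    then obtain r where r: "r \<in> G" "le r p1" "le r p2" using G unfolding filter_in_def by blast
    have "le r q1" "le r q2" using trans r p GQ QP by blast+
    then show "\<exists>r\<in>G'. le r q1 \<and> le r q2" using r GG' by blast
  qed
  moreover have "\<forall>\<alpha>\<in>omega1. G' \<inter> D \<alpha> \<noteq> {}" using m GG' by blast
  ultimately show ?thesis by blast
qed

lemma subposet: "poset P le \<Longrightarrow> Q \<subseteq> P \<Longrightarrow> Q \<noteq> {} \<Longrightarrow> poset Q le"
  unfolding poset_def by blast

lemma hard_l:
  assumes MA: "MA_aleph1 (sigma_linked :: 'a set \<Rightarrow> ('a \<Rightarrow> 'a \<Rightarrow> bool) \<Rightarrow> bool)"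
  shows "MA_aleph1 (aleph1_sigma_linked :: 'a set \<Rightarrow> ('a \<Rightarrow> 'a \<Rightarrow> bool) \<Rightarrow> bool)"
  unfolding MA_aleph1_def
proof (intro allI impI)
  fix P :: "'a set" and le D
  assume A: "poset P le \<and> aleph1_sigma_linked P le" and dn: "\<forall>\<alpha>\<in>omega1. dense P le (D \<alpha>)"
  obtain Q where Q: "Q \<subseteq> P" "Q \<noteq> {}" "|Q| \<le>o |omega1|"
    "\<forall>\<alpha>\<in>omega1. \<forall>p\<in>Q. \<exists>d\<in>Q \<inter> D \<alpha>. le d p"
    "\<forall>F. finite F \<and> F \<subseteq> Q \<and> (\<exists>r\<in>P. \<forall>p\<in>F. le r p) \<longrightarrow> (\<exists>r\<in>Q. \<forall>p\<in>F. le r p)"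
    using reduction[of P le D] A dn by blast
  have "\<exists>g. g ` omega1 = Q" using card_of_ordLeq2[OF Q(2), of omega1] Q(3) by simp
  then obtain p where p: "p ` omega1 = Q" by (elim exE)
  obtain L :: "nat \<Rightarrow> 'a set" where L: "\<forall>n. linked P le (L n)" "p ` omega1 \<subseteq> (\<Union>n. L n)"
  proof -
    have pP: "p ` omega1 \<subseteq> P" using p Q(1) by simp
    have "aleph1_sigma_linked P le" using A by simp
    then have "\<exists>L :: nat \<Rightarrow> 'a set. (\<forall>n. linked P le (L n)) \<and> p ` omega1 \<subseteq> (\<Union>n. L n)"
      using pP unfolding aleph1_sigma_linked_def by (elim allE[of _ p] impE) (rule pP, assumption)
    then show ?thesis using that by blast
  qed
  have "linked Q le (L n \<inter> Q)" for n
    unfolding linked_def compatible_def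
  proof (intro conjI ballI)
    show "L n \<inter> Q \<subseteq> Q" by blast
  next
    fix a b assume ab: "a \<in> L n \<inter> Q" "b \<in> L n \<inter> Q"
    then have "\<exists>r\<in>P. le r a \<and> le r b" using L(1) unfolding linked_def compatible_def by blast
    then have "\<exists>r\<in>P. \<forall>x\<in>{a,b}. le r x" by auto
    moreover have "finite {a,b} \<and> {a,b} \<subseteq> Q" using ab by auto
    ultimately have "\<exists>r\<in>Q. \<forall>x\<in>{a,b}. le r x" using Q(5) by blast
    then show "\<exists>r\<in>Q. le r a \<and> le r b" by auto
  qed
  moreover have "Q = (\<Union>n. L n \<inter> Q)" using L(2) p by blast
  ultimately have sl: "sigma_linked Q le" unfolding sigma_linked_def by (intro exI[of _ "\<lambda>n. L n \<inter> Q"]) blast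
  have pQ: "poset Q le" using subposet A Q by blast
  have dQ: "\<forall>\<alpha>\<in>omega1. dense Q le (D \<alpha> \<inter> Q)" using Q(4) unfolding dense_def by blast
  have "\<exists>G. filter_in Q le G \<and> (\<forall>\<alpha>\<in>omega1. G \<inter> (D \<alpha> \<inter> Q) \<noteq> {})"
    using MA[unfolded MA_aleph1_def, rule_format, of Q le "\<lambda>\<alpha>. D \<alpha> \<inter> Q"] pQ sl dQ by blast
  then obtain G where G: "filter_in Q le G" "\<forall>\<alpha>\<in>omega1. G \<inter> (D \<alpha> \<inter> Q) \<noteq> {}" by blast
  show "\<exists>G. filter_in P le G \<and> (\<forall>\<alpha>\<in>omega1. G \<inter> D \<alpha> \<noteq> {})"
    using lift[OF _ Q(1) G] A by blast
qed

lemma hard_c: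
  assumes MA: "MA_aleph1 (sigma_centered :: 'a set \<Rightarrow> ('a \<Rightarrow> 'a \<Rightarrow> bool) \<Rightarrow> bool)"
  shows "MA_aleph1 (aleph1_sigma_centered :: 'a set \<Rightarrow> ('a \<Rightarrow> 'a \<Rightarrow> bool) \<Rightarrow> bool)"
  unfolding MA_aleph1_def
proof (intro allI impI)
  fix P :: "'a set" and le D
  assume A: "poset P le \<and> aleph1_sigma_centered P le" and dn: "\<forall>\<alpha>\<in>omega1. dense P le (D \<alpha>)"
  obtain Q where Q: "Q \<subseteq> P" "Q \<noteq> {}" "|Q| \<le>o |omega1|"
    "\<forall>\<alpha>\<in>omega1. \<forall>p\<in>Q. \<exists>d\<in>Q \<inter> D \<alpha>. le d p"
    "\<forall>F. finite F \<and> F \<subseteq> Q \<and> (\<exists>r\<in>P. \<forall>p\<in>F. le r p) \<longrightarrow> (\<exists>r\<in>Q. \<forall>p\<in>F. le r p)"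
    using reduction[of P le D] A dn by blast
  have "\<exists>g. g ` omega1 = Q" using card_of_ordLeq2[OF Q(2), of omega1] Q(3) by simp
  then obtain p where p: "p ` omega1 = Q" by (elim exE)
  obtain L :: "nat \<Rightarrow> 'a set" where L: "\<forall>n. centered P le (L n)" "p ` omega1 \<subseteq> (\<Union>n. L n)"
  proof -
    have pP: "p ` omega1 \<subseteq> P" using p Q(1) by simp
    have "aleph1_sigma_centered P le" using A by simp
    then have "\<exists>L :: nat \<Rightarrow> 'a set. (\<forall>n. centered P le (L n)) \<and> p ` omega1 \<subseteq> (\<Union>n. L n)"
      using pP unfolding aleph1_sigma_centered_def by (elim allE[of _ p] impE) (rule pP, assumption)
    then show ?thesis using that by blast
  qed
  have "centered Q le (L n \<inter> Q)" for n
    unfolding centered_def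
  proof (intro conjI allI impI)
    show "L n \<inter> Q \<subseteq> Q" by blast
  next
    fix F assume F: "finite F \<and> F \<subseteq> L n \<inter> Q"
    then have "\<exists>r\<in>P. \<forall>x\<in>F. le r x" using L(1) unfolding centered_def by blast
    then show "\<exists>r\<in>Q. \<forall>x\<in>F. le r x" using Q(5) F by blast
  qed
  moreover have "Q = (\<Union>n. L n \<inter> Q)" using L(2) p by blast
  ultimately have sl: "sigma_centered Q le" unfolding sigma_centered_def by (intro exI[of _ "\<lambda>n. L n \<inter> Q"]) blast
  have pQ: "poset Q le" using subposet A Q by blast
  have dQ: "\<forall>\<alpha>\<in>omega1. dense Q le (D \<alpha> \<inter> Q)" using Q(4) unfolding dense_def by blast
  have "\<exists>G. filter_in Q le G \<and> (\<forall>\<alpha>\<in>omega1. G \<inter> (D \<alpha> \<inter> Q) \<noteq> {})"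
    using MA[unfolded MA_aleph1_def, rule_format, of Q le "\<lambda>\<alpha>. D \<alpha> \<inter> Q"] pQ sl dQ by blast
  then obtain G where G: "filter_in Q le G" "\<forall>\<alpha>\<in>omega1. G \<inter> (D \<alpha> \<inter> Q) \<noteq> {}" by blast
  show "\<exists>G. filter_in P le G \<and> (\<forall>\<alpha>\<in>omega1. G \<inter> D \<alpha> \<noteq> {})"
    using lift[OF _ Q(1) G] A by blast
qed

theorem lemma2:
  "(MA_aleph1 (sigma_linked :: 'a set \<Rightarrow> ('a \<Rightarrow> 'a \<Rightarrow> bool) \<Rightarrow> bool)
      \<longleftrightarrow> MA_aleph1 (aleph1_sigma_linked :: 'a set \<Rightarrow> ('a \<Rightarrow> 'a \<Rightarrow> bool) \<Rightarrow> bool))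
   \<and> (MA_aleph1 (sigma_centered :: 'a set \<Rightarrow> ('a \<Rightarrow> 'a \<Rightarrow> bool) \<Rightarrow> bool)
      \<longleftrightarrow> MA_aleph1 (aleph1_sigma_centered :: 'a set \<Rightarrow> ('a \<Rightarrow> 'a \<Rightarrow> bool) \<Rightarrow> bool))"
proof (intro conjI iffI)
  show "MA_aleph1 (aleph1_sigma_linked :: 'a set \<Rightarrow> ('a \<Rightarrow> 'a \<Rightarrow> bool) \<Rightarrow> bool)"
    if "MA_aleph1 (sigma_linked :: 'a set \<Rightarrow> ('a \<Rightarrow> 'a \<Rightarrow> bool) \<Rightarrow> bool)"
    using hard_l[OF that] .
  show "MA_aleph1 (sigma_linked :: 'a set \<Rightarrow> ('a \<Rightarrow> 'a \<Rightarrow> bool) \<Rightarrow> bool)"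
    if "MA_aleph1 (aleph1_sigma_linked :: 'a set \<Rightarrow> ('a \<Rightarrow> 'a \<Rightarrow> bool) \<Rightarrow> bool)"
    by (rule MA_mono[OF easy_l that])
  show "MA_aleph1 (aleph1_sigma_centered :: 'a set \<Rightarrow> ('a \<Rightarrow> 'a \<Rightarrow> bool) \<Rightarrow> bool)"
    if "MA_aleph1 (sigma_centered :: 'a set \<Rightarrow> ('a \<Rightarrow> 'a \<Rightarrow> bool) \<Rightarrow> bool)"
    using hard_c[OF that] .
  show "MA_aleph1 (sigma_centered :: 'a set \<Rightarrow> ('a \<Rightarrow> 'a \<Rightarrow> bool) \<Rightarrow> bool)"
    if "MA_aleph1 (aleph1_sigma_centered :: 'a set \<Rightarrow> ('a \<Rightarrow> 'a \<Rightarrow> bool) \<Rightarrow> bool)"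
    by (rule MA_mono[OF easy_c that])
qed

end
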